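(* Let $(R_n)_{n\in\mathbb Z}$ satisfy the $(1,4)$-system $$R_{2n}CR_{2n-2}=1+R_{2n-1},\qquad R_{2n+1}CR_{2n-1}=1+R_{2n}^4\qquad(n\in\mathbb Z),$$ and set $u_n=R_{2n}$. Then there is an element $K$ such that for all $n\in\mathbb Z$ $$u_{n+2}C-u_{n+1}K+u_n=0\qquad\text{and}\qquad u_{n+2}-Ku_{n+1}+Cu_n=0.$$ The values of $C$ and $K$ in the two cases of initial data are as follows. (a) For the initial data $R_0=yxy^{-1}$, $R_1=y$ (so that $u_0=yxy^{-1}$ and $u_1=(1+y)x^{-1}$), with $x,y$ non-commuting indeterminates and $C=xyx^{-1}y^{-1}$, one has $$K=\big(x^2+((1+y)x^{-1})^2\big)y^{-1}.$$ (b) For the initial data $R_1=YXY^{-1}$, $R_2=Y$, with $X,Y$ non-commuting indeterminates and $C=XYX^{-1}Y^{-1}$, one has $$K=\big(Y^2+((1+X)Y^{-1})^2\big)YX^{-1}Y^{-1}.$$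
   Context: Work in the free skew field (non-commutative rational functions) over $\mathbb C$ generated by the relevant pair of indeterminates. The recursion determines $R_n$ for all $n\in\mathbb Z$ from two consecutive values. *)

theory Defs
  imports Main
begin

definition system14 :: "'a::division_ring \<Rightarrow> (int \<Rightarrow> 'a) \<Rightarrow> bool" where
  "system14 C R \<longleftrightarrow>
     (\<forall>n::int. R (2*n) * C * R (2*n - 2) = 1 + R (2*n - 1) \<and>
               R (2*n + 1) * C * R (2*n - 1) = 1 + R (2*n) ^ 4)"

end

theory Submission
  imports Defs
begin

lemma laurent:
  fixes b c ib ic C a e f :: "'a::ring_1"
  assumes bi: "b*ib = 1" "ib*b = 1" and ci: "c*ic = 1" "ic*c = 1"
  and C: "C = ic*b*c*ib" and a: "a = b*ic*ib*(1+b)" and e: "e = (1+c^4)*ic*ib*c"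
  and f: "f = (1+e)*ic*b*ic*ib*c"
  shows "c * ((c^2 + (C*a)^2) * ib) = f*C + a"
    "(c^2 + (C*a)^2) * ib * c = f + C*a"
    "(c^2 + (C*a)^2) * ib * e = f^2 + (C*c)^2"
proof -
  have cb: "b*(ib*z) = z" "ib*(b*z) = z" "c*(ic*z) = z" "ic*(c*z) = z" for z
    using bi ci by (metis mult.assoc mult_1_left)+
  note ss = C a e f distrib_left distrib_right mult.assoc power2_eq_square power4_eq_xxxx bi ci cb
  show "c * ((c^2 + (C*a)^2) * ib) = f*C + a" by (simp add: ss add.assoc)
  show "(c^2 + (C*a)^2) * ib * c = f + C*a" by (simp add: ss add.assoc)
  show "(c^2 + (C*a)^2) * ib * e = f^2 + (C*c)^2" by (simp add: ss add.assoc)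
qed

lemma cancels:
  fixes x :: "'a::division_ring"
  assumes "x \<noteq> 0"
  shows "x * inverse x = 1" "inverse x * x = 1" "x * (inverse x * z) = z" "inverse x * (x * z) = z"
  using assms by (simp_all add: mult.assoc[symmetric])

lemma fwd:
  fixes p q r C D :: "'a::division_ring"
  assumes nz: "p \<noteq> 0" "q \<noteq> 0" and qD: "q*D = D*q"
  and h1: "r*C*p = D" and h2: "q*C*p = p*q"
  shows "r*C*q = q*r"
proof -
  note cp = cancels[OF nz(1)] cancels[OF nz(2)]
  have qD': "q*(D*z) = D*(q*z)" for z using qD by (metis mult.assoc)
  have C: "C = inverse q * p * q * inverse p"
  proof -
    have "C = inverse q * (q*C*p) * inverse p" by (simp add: mult.assoc cp)
    from this[unfolded h2] show ?thesis by (simp add: mult.assoc)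
  qed
  have r: "r = D * inverse q * inverse p * q"
  proof -
    have "r = (r*C*p) * inverse q * inverse p * q" by (simp add: C mult.assoc cp)
    from this[unfolded h1] show ?thesis by simp
  qed
  show ?thesis by (simp add: r C mult.assoc cp qD')
qed

lemma bwd:
  fixes p q r C D :: "'a::division_ring"
  assumes nz: "q \<noteq> 0" "r \<noteq> 0" and qD: "q*D = D*q"
  and h1: "r*C*p = D" and h2: "r*C*q = q*r"
  shows "q*C*p = p*q"
proof -
  note cp = cancels[OF nz(1)] cancels[OF nz(2)]
  have qD': "q*(D*z) = D*(q*z)" for z using qD by (metis mult.assoc)
  have C: "C = inverse r * q * r * inverse q"
  proof -
    have "C = inverse r * (r*C*q) * inverse q" by (simp add: mult.assoc cp)
    from this[unfolded h2] show ?thesis by (simp add: mult.assoc)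
  qed
  have p: "p = q * inverse r * inverse q * D"
  proof -
    have "p = q * inverse r * inverse q * (r*C*p)" by (simp add: C mult.assoc cp)
    from this[unfolded h1] show ?thesis by simp
  qed
  have iqD: "inverse q * D = D * inverse q"
  proof -
    have "inverse q * D = inverse q * (D * q) * inverse q" by (simp add: mult.assoc cp)
    also have "\<dots> = D * inverse q" by (simp add: qD[symmetric] mult.assoc cp)
    finally show ?thesis .
  qed
  have iqD': "inverse q*(D*z) = D*(inverse q*z)" for z using iqD by (metis mult.assoc)
  show ?thesis by (simp add: p C mult.assoc cp qD' iqD')
qed

lemma main:
  fixes C :: "'a::division_ring" and R :: "int \<Rightarrow> 'a"
  assumes sys: "system14 C R" and nz: "\<And>n. R n \<noteq> 0"
    and I0: "R (k0+1) * C * R k0 = R k0 * R (k0+1)"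
  defines "F \<equiv> \<lambda>n. (R (2*n+2)^2 + (C * R (2*n))^2) * inverse (R (2*n+1))"
  shows "\<forall>n. R (2*(n+2)) * C - R (2*(n+1)) * F 0 + R (2*n) = 0 \<and>
             R (2*(n+2)) - F 0 * R (2*(n+1)) + C * R (2*n) = 0"
proof -
  have sysk: "R (k+1) * C * R (k-1) = 1 + R k ^ (if even k then 4 else 1)" for k
  proof (cases "even k")
    case True
    then obtain n where k: "k = 2*n" by blast
    from sys have "R (2*n + 1) * C * R (2*n - 1) = 1 + R (2*n) ^ 4"
      unfolding system14_def by blast
    then show ?thesis using k by simp
  next
    case False
    then obtain m where "k = 2*m + 1" by (auto elim: oddE)
    then have k: "k = 2*(m+1) - 1" by simp
    define n where "n = m + 1"
    have k: "k = 2*n - 1" using k n_def by simp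
    from sys have "R (2*n) * C * R (2*n - 2) = 1 + R (2*n - 1)"
      unfolding system14_def by blast
    moreover have "k + 1 = 2*n" "k - 1 = 2*n - 2" using k by simp_all
    ultimately show ?thesis using False k by simp
  qed
  have comm: "R k * (1 + R k ^ m) = (1 + R k ^ m) * R k" for k m
    by (simp add: distrib_left distrib_right power_commutes)
  have inv: "R (k+1) * C * R k = R k * R (k+1)" for k
  proof (induction k rule: int_induct[of _ k0])
    case base
    then show ?case using I0 .
  next
    case (step1 i)
    show ?case
      using fwd[OF nz nz comm sysk[of "i+1"]] step1(2) by simp
  next
    case (step2 i)
    show ?case
      using bwd[OF nz nz comm sysk[of i]] step2(2) by simp
  qed
  have step: "c * F n = f * C + a \<and> F n * c = f + C * a \<and> F (n+1) = F n"
    if abbr: "a = R (2*n)" "b = R (2*n+1)" "c = R (2*n+2)" "e = R(2*n+3)" "f = R (2*n+4)" for n a b c e f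
  proof -
    have nzb: "b \<noteq> 0" and nzc: "c \<noteq> 0" and nze: "e \<noteq> 0" using nz abbr by auto
    note cb = cancels[OF nzb] cancels[OF nzc]
    have ar: "2*n+1+1 = 2*n+2" "2*n+1-1 = 2*n" "2*n+2+1 = 2*n+3" "2*n+2-1 = 2*n+1"
      "2*n+3+1 = 2*n+4" "2*n+3-1 = 2*n+2" by simp_all
    have ev: "\<not> even (2*n+1)" "even (2*n+2)" "\<not> even (2*n+3)" by simp_all
    have i1: "c*C*b = b*c" using inv[of "2*n+1", unfolded ar] abbr by simp
    have s1: "c*C*a = 1 + b" using sysk[of "2*n+1", unfolded ar if_not_P[OF ev(1)]] abbr by simp
    have s2: "e*C*b = 1 + c^4" using sysk[of "2*n+2", unfolded ar if_P[OF ev(2)]] abbr by simp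
    have s3: "f*C*c = 1 + e" using sysk[of "2*n+3", unfolded ar if_not_P[OF ev(3)]] abbr by simp
    have Cs: "C = inverse c * b * c * inverse b"
    proof -
      have "C = inverse c * (c*C*b) * inverse b" by (simp add: mult.assoc cb)
      from this[unfolded i1] show ?thesis by (simp add: mult.assoc)
    qed
    have as: "a = b * inverse c * inverse b * (1+b)"
    proof -
      have "a = b * inverse c * inverse b * (c*C*a)" by (simp add: Cs mult.assoc cb)
      from this[unfolded s1] show ?thesis by simp
    qed
    have es: "e = (1+c^4) * inverse c * inverse b * c"
    proof -
      have "e = (e*C*b) * inverse c * inverse b * c" by (simp add: Cs mult.assoc cb)
      from this[unfolded s2] show ?thesis by simp
    qed
    have fs: "f = (1+e) * inverse c * b * inverse c * inverse b * c"
    proof -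
      have "f = (f*C*c) * inverse c * b * inverse c * inverse b * c" by (simp add: Cs mult.assoc cb)
      from this[unfolded s3] show ?thesis by simp
    qed
    note L = laurent[OF cb(1) cb(2) cb(5) cb(6) Cs as es fs]
    have Fn: "F n = (c^2 + (C*a)^2) * inverse b" using abbr by (simp add: F_def)
    have Fn1: "F (n+1) = (f^2 + (C*c)^2) * inverse e" using abbr
      by (simp add: F_def algebra_simps)
    have "F (n+1) = F n * e * inverse e" using L(3) Fn Fn1 by simp
    also have "\<dots> = F n" using nze by (simp add: mult.assoc)
    finally show ?thesis using L(1,2) Fn by (simp add: mult.assoc)
  qed
  have Fc: "F n = F 0" for n
  proof (induction n rule: int_induct[of _ 0])
    case base then show ?case by simp
  next
    case (step1 i) then show ?case using step[OF refl refl refl refl refl, of i] by simp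
  next
    case (step2 i) then show ?case using step[OF refl refl refl refl refl, of "i-1"] by simp
  qed
  show ?thesis
  proof
    fix n :: int
    have e: "2*(n+2) = 2*n+4" "2*(n+1) = 2*n+2" by simp_all
    from step[OF refl refl refl refl refl, of n] show "R (2*(n+2)) * C - R (2*(n+1)) * F 0 + R (2*n) = 0 \<and>
             R (2*(n+2)) - F 0 * R (2*(n+1)) + C * R (2*n) = 0"
      unfolding e Fc[of n] by (simp add: algebra_simps)
  qed
qed

theorem theorem4p2:
  fixes dummy :: "'a::{division_ring, ring_char_0}"
  shows
  "(\<forall>(x::'a) y (R::int \<Rightarrow> 'a).
      let C = x * y * inverse x * inverse y;
          K = (x^2 + ((1 + y) * inverse x)^2) * inverse y
      in (system14 C R \<and> (\<forall>n. R n \<noteq> 0) \<and>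
          R 0 = y * x * inverse y \<and> R 1 = y)
         \<longrightarrow> (\<forall>n::int. R (2*(n+2)) * C - R (2*(n+1)) * K + R (2*n) = 0 \<and>
                         R (2*(n+2)) - K * R (2*(n+1)) + C * R (2*n) = 0))
   \<and>
   (\<forall>(X::'a) Y (R::int \<Rightarrow> 'a).
      let C = X * Y * inverse X * inverse Y;
          K = (Y^2 + ((1 + X) * inverse Y)^2) * Y * inverse X * inverse Y
      in (system14 C R \<and> (\<forall>n. R n \<noteq> 0) \<and>
          R 1 = Y * X * inverse Y \<and> R 2 = Y)
         \<longrightarrow> (\<forall>n::int. R (2*(n+2)) * C - R (2*(n+1)) * K + R (2*n) = 0 \<and>
                         R (2*(n+2)) - K * R (2*(n+1)) + C * R (2*n) = 0))"
proof (intro conjI allI)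
  fix x y :: 'a and R :: "int \<Rightarrow> 'a"
  show "let C = x * y * inverse x * inverse y;
          K = (x^2 + ((1 + y) * inverse x)^2) * inverse y
      in (system14 C R \<and> (\<forall>n. R n \<noteq> 0) \<and>
          R 0 = y * x * inverse y \<and> R 1 = y)
         \<longrightarrow> (\<forall>n::int. R (2*(n+2)) * C - R (2*(n+1)) * K + R (2*n) = 0 \<and>
                         R (2*(n+2)) - K * R (2*(n+1)) + C * R (2*n) = 0)"
    unfolding Let_def
  proof (intro impI)
    define C where "C = x * y * inverse x * inverse y"
    assume "system14 (x * y * inverse x * inverse y) R \<and> (\<forall>n. R n \<noteq> 0) \<and>
          R 0 = y * x * inverse y \<and> R 1 = y"
    then have sys: "system14 C R" and nz: "\<And>n. R n \<noteq> 0" and R0: "R 0 = y * x * inverse y"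
      and R1: "R 1 = y" unfolding C_def by auto
    have y0: "y \<noteq> 0" using nz[of 1] R1 by simp
    have x0: "x \<noteq> 0" using nz[of 0] R0 by auto
    note cx = cancels[OF x0] and cy = cancels[OF y0]
    have I0: "R (0+1) * C * R 0 = R 0 * R (0+1)"
      by (simp add: R0 R1 C_def mult.assoc cx cy)
    have CR0: "C * R 0 = x" by (simp add: R0 C_def mult.assoc cx cy)
    have "R (2*1) * C * R (2*1 - 2) = 1 + R (2*1 - 1)" using sys unfolding system14_def by blast
    then have "R 2 * x = 1 + y" using CR0 R1 by (simp add: mult.assoc)
    then have R2: "R 2 = (1 + y) * inverse x"
      by (metis x0 mult.assoc right_inverse mult_1_right)
    have K: "((R (2*0+2))\<^sup>2 + (C * R (2*0))\<^sup>2) * inverse (R (2*0+1))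
        = (x^2 + ((1 + y) * inverse x)^2) * inverse y"
      using R2 CR0 R1 by (simp add: add.commute)
    show "\<forall>n::int. R (2*(n+2)) * (x * y * inverse x * inverse y) - R (2*(n+1)) * ((x^2 + ((1 + y) * inverse x)^2) * inverse y) + R (2*n) = 0 \<and>
                         R (2*(n+2)) - ((x^2 + ((1 + y) * inverse x)^2) * inverse y) * R (2*(n+1)) + (x * y * inverse x * inverse y) * R (2*n) = 0"
      using main[OF sys nz I0, unfolded K] unfolding C_def .
  qed
next
  fix X Y :: 'a and R :: "int \<Rightarrow> 'a"
  show "let C = X * Y * inverse X * inverse Y;
          K = (Y^2 + ((1 + X) * inverse Y)^2) * Y * inverse X * inverse Y
      in (system14 C R \<and> (\<forall>n. R n \<noteq> 0) \<and>
          R 1 = Y * X * inverse Y \<and> R 2 = Y)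
         \<longrightarrow> (\<forall>n::int. R (2*(n+2)) * C - R (2*(n+1)) * K + R (2*n) = 0 \<and>
                         R (2*(n+2)) - K * R (2*(n+1)) + C * R (2*n) = 0)"
    unfolding Let_def
  proof (intro impI)
    define C where "C = X * Y * inverse X * inverse Y"
    assume "system14 (X * Y * inverse X * inverse Y) R \<and> (\<forall>n. R n \<noteq> 0) \<and>
          R 1 = Y * X * inverse Y \<and> R 2 = Y"
    then have sys: "system14 C R" and nz: "\<And>n. R n \<noteq> 0" and R1: "R 1 = Y * X * inverse Y"
      and R2: "R 2 = Y" unfolding C_def by auto
    have y0: "Y \<noteq> 0" using nz[of 2] R2 by simp
    have x0: "X \<noteq> 0" using nz[of 1] R1 by auto
    note cx = cancels[OF x0] and cy = cancels[OF y0]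
    have I0: "R (1+1) * C * R 1 = R 1 * R (1+1)"
      by (simp add: R1 R2 C_def mult.assoc cx cy)
    have "R (2*1) * C * R (2*1 - 2) = 1 + R (2*1 - 1)" using sys unfolding system14_def by blast
    then have "Y * (C * R 0) = 1 + Y * X * inverse Y" using R1 R2 by (simp add: mult.assoc)
    then have CR0: "C * R 0 = (1 + X) * inverse Y"
      by (metis (no_types, lifting) cy(4) distrib_left distrib_right mult.assoc mult_1_left mult_1_right)
    have iR1: "inverse (R 1) = Y * inverse X * inverse Y"
      unfolding R1 by (rule inverse_unique) (simp add: mult.assoc cx cy)
    have K: "((R (2*0+2))\<^sup>2 + (C * R (2*0))\<^sup>2) * inverse (R (2*0+1))
        = (Y^2 + ((1 + X) * inverse Y)^2) * Y * inverse X * inverse Y"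
      using R2 CR0 iR1 by (simp add: mult.assoc)
    show "\<forall>n::int. R (2*(n+2)) * (X * Y * inverse X * inverse Y) - R (2*(n+1)) * ((Y^2 + ((1 + X) * inverse Y)^2) * Y * inverse X * inverse Y) + R (2*n) = 0 \<and>
                         R (2*(n+2)) - ((Y^2 + ((1 + X) * inverse Y)^2) * Y * inverse X * inverse Y) * R (2*(n+1)) + (X * Y * inverse X * inverse Y) * R (2*n) = 0"
      using main[OF sys nz I0, unfolded K] unfolding C_def .
  qed
qed

end
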